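(* Let $\mathbf X$ be a nonempty set, $m\ge1$ an integer and $Y>0$. Consider the protocol in which at each round $n=1,2,\dots$ Reality announces $x_n\in\mathbf X$, Predictor announces $\mu_n\in\mathbb R^m$, and Reality announces $y_n\in YU_m$. Let $F_1,F_2,\dots$ be a sequence of functions $F_i:\mathbf X\to\mathbb R^m$ and let $w_1,w_2,\dots$ be positive weights with $\sum_i w_i=1$. Then there is a strategy for Predictor producing predictions $\mu_n\in YU_m$ that guarantees, for all $N=1,2,\dots$ and all $i=1,2,\dots$, $$\sum_{n=1}^N\|y_n-\mu_n\|^2\le\sum_{n=1}^N\|y_n-F_i(x_n)\|^2+8Y^2\ln\frac1{w_i}.$$
   Context: $\|\cdot\|$ is the Euclidean norm on $\mathbb R^m$ and $U_m=\{v\in\mathbb R^m:\|v\|\le1\}$ is the closed unit ball, so $YU_m$ is the closed ball of radius $Y$ centred at $0$. A strategy for Predictor maps each history $(x_1,y_1,\dots,x_{n-1},y_{n-1},x_n)$ to $\mu_n$; the guarantee must hold for every (possibly adaptive) sequence of moves of Reality. *)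

theory Defs
  imports "HOL-Analysis.Analysis"
begin

end

theory Submission
  imports Defs "HOL-Analysis.Analysis"
begin

lemma k_mono:
  fixes a p q :: real
  assumes "a > 0" "0 \<le> p" "p \<le> q" "2*a*q^2 \<le> 1"
  shows "p * exp (-a*p^2) \<le> q * exp (-a*q^2)"
proof (rule DERIV_nonneg_imp_nondecreasing[OF assms(3)])
  fix x assume x: "p \<le> x" "x \<le> q"
  have "x^2 \<le> q^2" using x assms by (intro power_mono) auto
  hence "2*a*x^2 \<le> 1" using assms by (smt (verit) mult_left_mono)
  have "((\<lambda>x. x * exp (-a*x^2)) has_real_derivative (1 * exp (-a*x^2) + x * (exp (-a*x^2) * (-a * (2 * x ^ 1 * 1))))) (at x)"
    by (intro derivative_eq_intros) auto
  moreover have "1 * exp (-a*x^2) + x * (exp (-a*x^2) * (-a * (2 * x ^ 1 * 1))) = (1 - 2*a*x^2) * exp (-a*x^2)"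
    by (simp add: algebra_simps power2_eq_square)
  moreover have "(1 - 2*a*x^2) * exp (-a*x^2) \<ge> 0" using \<open>2*a*x^2 \<le> 1\<close> by simp
  ultimately show "\<exists>y. ((\<lambda>x. x * exp (-a*x^2)) has_real_derivative y) (at x) \<and> 0 \<le> y" by metis
qed

lemma tangent1:
  fixes a p q :: real
  assumes "a > 0" "0 \<le> p" "0 \<le> q" "2*a*p^2 \<le> 1" "2*a*q^2 \<le> 1"
  shows "exp (-a*q^2) \<le> exp (-a*p^2) * (1 + 2*a*p*(p-q))"
proof -
  define f where "f t = exp (-a*p^2) * (1 + 2*a*p*(p-t)) - exp (-a*t^2)" for t
  have D: "(f has_real_derivative (2*a) * (t * exp (-a*t^2) - p * exp (-a*p^2))) (at t)" for t
    unfolding f_def[abs_def] by (rule derivative_eq_intros refl | simp add: algebra_simps)+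
  have fp: "f p = 0" by (simp add: f_def)
  show ?thesis
  proof (cases "p \<le> q")
    case True
    have "f p \<le> f q"
    proof (rule DERIV_nonneg_imp_nondecreasing[OF True])
      fix x assume x: "p \<le> x" "x \<le> q"
      have "x^2 \<le> q^2" using x assms by (intro power_mono) auto
      hence "2*a*x^2 \<le> 1" using assms by (smt (verit) mult_left_mono)
      have "p * exp (-a*p^2) \<le> x * exp (-a*x^2)" using k_mono[OF assms(1,2) x(1) \<open>2*a*x^2 \<le> 1\<close>] .
      hence "0 \<le> (2*a) * (x * exp (-a*x^2) - p * exp (-a*p^2))" using assms(1) by simp
      thus "\<exists>y. (f has_real_derivative y) (at x) \<and> 0 \<le> y" using D by blast
    qed
    thus ?thesis using fp by (simp add: f_def)
  next
    case False
    have qp: "q \<le> p" using False by simp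
    have "f q \<ge> f p"
    proof (rule DERIV_nonpos_imp_nonincreasing[of q p f, OF qp])
      fix x assume x: "q \<le> x" "x \<le> p"
      have "x * exp (-a*x^2) \<le> p * exp (-a*p^2)" using k_mono[OF assms(1) _ x(2) assms(4)] x assms by auto
      hence "(2*a) * (x * exp (-a*x^2) - p * exp (-a*p^2)) \<le> 0" using assms(1) by (simp add: mult_nonneg_nonpos)
      thus "\<exists>y. (f has_real_derivative y) (at x) \<and> y \<le> 0" using D by blast
    qed
    thus ?thesis using fp by (simp add: f_def)
  qed
qed


lemma tangent_vec:
  fixes a b :: "'a::real_inner"
  assumes Y: "Y > 0" and na: "norm a \<le> 2*Y" and nb: "norm b \<le> 2*Y"
  shows "exp (-(1/(8*Y^2)) * (norm b)^2) \<le> exp (-(1/(8*Y^2)) * (norm a)^2) * (1 - 2*(1/(8*Y^2)) * (a \<bullet> (b - a)))"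
proof -
  define e where "e = 1/(8*Y^2)"
  have e: "e > 0" using Y by (simp add: e_def)
  have "(norm a)^2 \<le> (2*Y)^2" using na by (intro power_mono) auto
  hence pa: "2*e*(norm a)^2 \<le> 1" using Y by (simp add: e_def field_simps power_mult_distrib)
  have "(norm b)^2 \<le> (2*Y)^2" using nb by (intro power_mono) auto
  hence pb: "2*e*(norm b)^2 \<le> 1" using Y by (simp add: e_def field_simps power_mult_distrib)
  have t: "exp (-e*(norm b)^2) \<le> exp (-e*(norm a)^2) * (1 + 2*e*norm a*(norm a - norm b))"
    by (rule tangent1[OF e norm_ge_zero norm_ge_zero pa pb])
  have cs: "a \<bullet> b \<le> norm a * norm b" by (rule norm_cauchy_schwarz)
  have aa: "a \<bullet> a = (norm a)^2" by (simp add: power2_norm_eq_inner)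
  have "1 + 2*e*norm a*(norm a - norm b) \<le> 1 - 2*e*(a \<bullet> (b - a))"
    using cs aa e by (simp add: inner_diff_right algebra_simps power2_eq_square)
  hence "exp (-e*(norm a)^2) * (1 + 2*e*norm a*(norm a - norm b)) \<le> exp (-e*(norm a)^2) * (1 - 2*e*(a \<bullet> (b - a)))"
    by (intro mult_left_mono) auto
  with t show ?thesis unfolding e_def by linarith
qed

definition clip :: "real \<Rightarrow> 'a::real_normed_vector \<Rightarrow> 'a" where
  "clip Y z = (if norm z \<le> Y then z else (Y / norm z) *\<^sub>R z)"

lemma clip_norm: "Y \<ge> 0 \<Longrightarrow> norm (clip Y z) \<le> Y"
  by (auto simp: clip_def)

lemma clip_dist:
  fixes y z :: "'a::real_inner"
  assumes Y: "Y > 0" and ny: "norm y \<le> Y"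
  shows "norm (y - clip Y z) \<le> norm (y - z)"
proof (cases "norm z \<le> Y")
  case True thus ?thesis by (simp add: clip_def)
next
  case False
  define r where "r = norm z"
  define c where "c = Y / r"
  have r: "r > Y" using False by (simp add: r_def)
  have cr: "c * r = Y" using r Y by (simp add: c_def)
  have c0: "c \<ge> 0" "c \<le> 1" using r Y by (auto simp: c_def)
  have s: "y \<bullet> z \<le> Y * r" unfolding r_def
    using norm_cauchy_schwarz[of y z] ny by (smt (verit) mult_right_mono norm_ge_zero)
  have e1: "(norm (y - c *\<^sub>R z))^2 = (norm y)^2 - 2*c*(y \<bullet> z) + c^2 * r^2"
  proof -
    have "(norm (y - c *\<^sub>R z))^2 = (y - c *\<^sub>R z) \<bullet> (y - c *\<^sub>R z)" by (simp add: power2_norm_eq_inner)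
    also have "\<dots> = y \<bullet> y - 2*c*(y \<bullet> z) + c^2 * (z \<bullet> z)"
      by (simp add: inner_diff_left inner_diff_right algebra_simps power2_eq_square inner_commute)
    finally show ?thesis by (simp add: r_def power2_norm_eq_inner)
  qed
  have e2: "(norm (y - z))^2 = (norm y)^2 - 2*(y \<bullet> z) + r^2"
    by (simp add: power2_norm_eq_inner inner_diff_left inner_diff_right r_def algebra_simps inner_commute)
  have "(norm y)^2 - 2*(y \<bullet> z) + r^2 - ((norm y)^2 - 2*c*(y \<bullet> z) + c^2 * r^2)
      = (1-c)*(r^2*(1+c) - 2*(y \<bullet> z))" by (simp add: algebra_simps power2_eq_square)
  also have "\<dots> \<ge> (1-c)*(r^2*(1+c) - 2*(Y*r))" using c0 s by (intro mult_left_mono) auto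
  also have "(1-c)*(r^2*(1+c) - 2*(Y*r)) = (1-c)*r*(r - Y)" using cr
    by (simp add: algebra_simps power2_eq_square)
  also have "\<dots> \<ge> 0" using c0 r Y by simp
  finally have "(norm (y - c *\<^sub>R z))^2 \<le> (norm (y - z))^2" using e1 e2 by linarith
  hence "norm (y - c *\<^sub>R z) \<le> norm (y - z)" by (rule power2_le_imp_le) simp
  thus ?thesis using False by (simp add: clip_def c_def r_def)
qed


lemma mix_summable:
  fixes g :: "nat \<Rightarrow> 'a::euclidean_space"
  assumes v0: "\<And>i. v i \<ge> 0" and sv: "summable v" and ng: "\<And>i. norm (g i) \<le> Y" and c: "c \<ge> 0"
  shows "summable (\<lambda>i. (c * v i) *\<^sub>R g i)"
proof (rule summable_comparison_test'[where N=0])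
  show "summable (\<lambda>i. c * v i * Y)" using sv by (intro summable_mult2 summable_mult)
  fix n
  show "norm ((c * v n) *\<^sub>R g n) \<le> c * v n * Y"
    using v0[of n] c ng[of n] by (simp add: abs_mult mult_left_mono)
qed

lemma one_step:
  fixes g :: "nat \<Rightarrow> 'a::euclidean_space" and y :: 'a
  assumes Y: "Y > 0" and v0: "\<And>i. v i \<ge> 0" and sv: "summable v" and Zp: "suminf v > 0"
    and ng: "\<And>i. norm (g i) \<le> Y" and ny: "norm y \<le> Y"
  shows "norm (\<Sum>i. (v i / suminf v) *\<^sub>R g i) \<le> Y"
    and "(\<Sum>i. v i * exp (-(1/(8*Y^2)) * (norm (y - g i))^2))
          \<le> suminf v * exp (-(1/(8*Y^2)) * (norm (y - (\<Sum>i. (v i / suminf v) *\<^sub>R g i)))^2)"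
proof -
  define Z where "Z = suminf v"
  define \<mu> where "\<mu> = (\<Sum>i. (v i / Z) *\<^sub>R g i)"
  define e where "e = 1/(8*Y^2)"
  have e: "e > 0" using Y by (simp add: e_def)
  have Z: "Z > 0" using Zp by (simp add: Z_def)
  have sm: "summable (\<lambda>i. ((1/Z) * v i) *\<^sub>R g i)" using mix_summable[OF v0 sv ng, of "1/Z"] Z by simp
  have sm': "summable (\<lambda>i. (v i / Z) *\<^sub>R g i)" using sm by simp
  have bnd: "norm ((v n / Z) *\<^sub>R g n) \<le> (1/Z) * v n * Y" for n
  proof -
    have "norm ((v n / Z) *\<^sub>R g n) = (v n / Z) * norm (g n)" using v0[of n] Z by simp
    also have "\<dots> \<le> (v n / Z) * Y" using v0[of n] Z ng[of n] by (intro mult_left_mono) auto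
    finally show ?thesis by simp
  qed
  have sn: "summable (\<lambda>i. norm ((v i / Z) *\<^sub>R g i))"
  proof (rule summable_comparison_test'[where N=0])
    show "summable (\<lambda>i. (1/Z) * v i * Y)" using sv by (intro summable_mult2 summable_mult)
    fix n
    show "norm (norm ((v n / Z) *\<^sub>R g n)) \<le> (1/Z) * v n * Y"
      using bnd[of n] by simp
  qed
  have "norm \<mu> \<le> (\<Sum>i. norm ((v i / Z) *\<^sub>R g i))" unfolding \<mu>_def by (rule summable_norm[OF sn])
  also have "\<dots> \<le> (\<Sum>i. (1/Z) * v i * Y)"
    by (rule suminf_le[OF _ sn]) (use bnd sv in \<open>auto intro!: summable_mult2 summable_mult\<close>)
  also have "\<dots> = (\<Sum>i. (1/Z) * v i) * Y" using sv by (intro suminf_mult2[symmetric] summable_mult)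
  also have "(\<Sum>i. (1/Z) * v i) = (1/Z) * Z" unfolding Z_def using sv by (rule suminf_mult)
  also have "(1/Z) * Z * Y = Y" using Z by simp
  finally have nmu: "norm \<mu> \<le> Y" .
  thus "norm (\<Sum>i. (v i / suminf v) *\<^sub>R g i) \<le> Y" by (simp add: \<mu>_def Z_def)
  have sv1: "summable (\<lambda>i. (1 * v i) *\<^sub>R g i)" using mix_summable[OF v0 sv ng, of 1] by simp
  hence sv2: "summable (\<lambda>i. v i *\<^sub>R g i)" by simp
  have "\<mu> = (\<Sum>i. (1/Z) *\<^sub>R (v i *\<^sub>R g i))" unfolding \<mu>_def by (simp add: divide_inverse mult.commute)
  also have "\<dots> = (1/Z) *\<^sub>R (\<Sum>i. v i *\<^sub>R g i)" by (rule suminf_scaleR_right[OF sv2, symmetric])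
  finally have Zmu: "(\<Sum>i. v i *\<^sub>R g i) = Z *\<^sub>R \<mu>" using Z by simp
  define a where "a = \<mu> - y"
  define h where "h = exp (-e * (norm a)^2)"
  have na: "norm a \<le> 2*Y" unfolding a_def using nmu ny norm_triangle_ineq4[of \<mu> y] by linarith
  have trm: "v i * exp (-e * (norm (y - g i))^2)
      \<le> h * v i - 2*e*h*(a \<bullet> (v i *\<^sub>R g i)) + (2*e*h*(a \<bullet> \<mu>)) * v i" for i
  proof -
    have nb: "norm (g i - y) \<le> 2*Y" using ng[of i] ny norm_triangle_ineq4[of "g i" y] by linarith
    have "exp (-e * (norm (g i - y))^2) \<le> h * (1 - 2*e*(a \<bullet> ((g i - y) - a)))"
      using tangent_vec[OF Y na nb] unfolding e_def h_def by simp
    also have "(g i - y) - a = g i - \<mu>" by (simp add: a_def)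
    finally have "exp (-e * (norm (y - g i))^2) \<le> h * (1 - 2*e*(a \<bullet> (g i - \<mu>)))"
      by (simp add: norm_minus_commute)
    hence "v i * exp (-e * (norm (y - g i))^2) \<le> v i * (h * (1 - 2*e*(a \<bullet> (g i - \<mu>))))"
      using v0[of i] by (intro mult_left_mono)
    also have "\<dots> = h * v i - 2*e*h*(a \<bullet> (v i *\<^sub>R g i)) + (2*e*h*(a \<bullet> \<mu>)) * v i"
      by (simp add: inner_diff_right algebra_simps)
    finally show ?thesis .
  qed
  have sL: "summable (\<lambda>i. v i * exp (-e * (norm (y - g i))^2))"
  proof (rule summable_comparison_test'[OF sv, where N=0])
    fix n
    have "exp (-e * (norm (y - g n))^2) \<le> 1" using e by simp
    thus "norm (v n * exp (-e * (norm (y - g n))^2)) \<le> v n" using v0[of n]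
      by (simp add: abs_mult mult_left_le)
  qed
  have sI: "summable (\<lambda>i. a \<bullet> (v i *\<^sub>R g i))"
    by (rule bounded_linear.summable[OF bounded_linear_inner_right sv2])
  have sIv: "(\<Sum>i. a \<bullet> (v i *\<^sub>R g i)) = a \<bullet> (Z *\<^sub>R \<mu>)"
    using bounded_linear.suminf[OF bounded_linear_inner_right sv2, of a] Zmu by simp
  have s1: "summable (\<lambda>i. h * v i)" using sv by (rule summable_mult)
  have s2: "summable (\<lambda>i. 2*e*h*(a \<bullet> (v i *\<^sub>R g i)))" using sI by (rule summable_mult)
  have s3: "summable (\<lambda>i. (2*e*h*(a \<bullet> \<mu>)) * v i)" using sv by (rule summable_mult)
  have "(\<Sum>i. v i * exp (-e * (norm (y - g i))^2))
      \<le> (\<Sum>i. h * v i - 2*e*h*(a \<bullet> (v i *\<^sub>R g i)) + (2*e*h*(a \<bullet> \<mu>)) * v i)"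
    by (rule suminf_le[OF trm sL]) (intro summable_add summable_diff s1 s2 s3)
  also have "\<dots> = (\<Sum>i. h * v i) - (\<Sum>i. 2*e*h*(a \<bullet> (v i *\<^sub>R g i))) + (\<Sum>i. (2*e*h*(a \<bullet> \<mu>)) * v i)"
    by (simp only: suminf_diff[OF s1 s2] suminf_add[OF summable_diff[OF s1 s2] s3])
  also have "\<dots> = h * Z - 2*e*h*(a \<bullet> (Z *\<^sub>R \<mu>)) + 2*e*h*(a \<bullet> \<mu>) * Z"
    by (simp only: suminf_mult[OF sI] sIv suminf_mult[OF sv] Z_def)
  also have "\<dots> = Z * h" by (simp add: algebra_simps)
  finally show "(\<Sum>i. v i * exp (-(1/(8*Y^2)) * (norm (y - g i))^2))
          \<le> suminf v * exp (-(1/(8*Y^2)) * (norm (y - (\<Sum>i. (v i / suminf v) *\<^sub>R g i)))^2)"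
    by (simp add: h_def a_def e_def Z_def \<mu>_def norm_minus_commute)
qed


definition lossL :: "real \<Rightarrow> ('x \<Rightarrow> 'a::real_normed_vector) \<Rightarrow> ('x \<times> 'a) list \<Rightarrow> real" where
  "lossL Y f h = sum_list (map (\<lambda>p. (norm (snd p - clip Y (f (fst p))))^2) h)"

definition wt :: "real \<Rightarrow> (nat \<Rightarrow> real) \<Rightarrow> (nat \<Rightarrow> 'x \<Rightarrow> 'a::real_normed_vector) \<Rightarrow> ('x \<times> 'a) list \<Rightarrow> nat \<Rightarrow> real" where
  "wt Y w F h i = w i * exp (-(1/(8*Y^2)) * lossL Y (F i) h)"

definition strat :: "real \<Rightarrow> (nat \<Rightarrow> real) \<Rightarrow> (nat \<Rightarrow> 'x \<Rightarrow> 'a::real_normed_vector) \<Rightarrow> ('x \<times> 'a) list \<Rightarrow> 'x \<Rightarrow> 'a" where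
  "strat Y w F h x = (\<Sum>i. (wt Y w F h i / suminf (wt Y w F h)) *\<^sub>R clip Y (F i x))"

lemma lossL_nonneg: "lossL Y f h \<ge> 0"
  unfolding lossL_def by (induction h) auto

lemma lossL_snoc: "lossL Y f (h @ [p]) = lossL Y f h + (norm (snd p - clip Y (f (fst p))))^2"
  unfolding lossL_def by simp

lemma wt_facts:
  assumes Y: "Y > 0" and wp: "\<forall>i. w i > 0" and ws: "summable w"
  shows "\<And>i. wt Y w F h i > 0" "\<And>i. wt Y w F h i \<le> w i" "summable (wt Y w F h)" "suminf (wt Y w F h) > 0"
proof -
  show p: "wt Y w F h i > 0" for i using wp by (simp add: wt_def)
  show l: "wt Y w F h i \<le> w i" for i
  proof -
    have "exp (-(1/(8*Y^2)) * lossL Y (F i) h) \<le> 1" using Y lossL_nonneg[of Y "F i" h] 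
      by (simp add: mult_nonneg_nonneg)
    thus ?thesis using wp unfolding wt_def by (simp add: mult_left_le)
  qed
  show s: "summable (wt Y w F h)"
    by (rule summable_comparison_test'[OF ws, where N=0]) (use p l in \<open>auto simp: less_imp_le\<close>)
  show "suminf (wt Y w F h) > 0" by (rule suminf_pos[OF s p])
qed

theorem lemma1:
  fixes Y :: real
    and F :: "nat \<Rightarrow> 'x \<Rightarrow> real ^ 'm"
    and w :: "nat \<Rightarrow> real"
  assumes "Y > 0"
    and "\<forall>i. w i > 0"
    and "w sums 1"
  shows "\<exists>S :: ('x \<times> (real ^ 'm)) list \<Rightarrow> 'x \<Rightarrow> real ^ 'm.
           \<forall>(x :: nat \<Rightarrow> 'x) (y :: nat \<Rightarrow> real ^ 'm).
             (\<forall>n\<ge>1. norm (y n) \<le> Y) \<longrightarrow>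
             (\<forall>n\<ge>1. norm (S (map (\<lambda>k. (x k, y k)) [1..<n]) (x n)) \<le> Y) \<and>
             (\<forall>N\<ge>1. \<forall>i.
                (\<Sum>n=1..N. (norm (y n - S (map (\<lambda>k. (x k, y k)) [1..<n]) (x n)))\<^sup>2)
                \<le> (\<Sum>n=1..N. (norm (y n - F i (x n)))\<^sup>2) + 8 * Y\<^sup>2 * ln (1 / w i))"
proof (rule exI[where x="strat Y w F"], intro allI impI conjI)
  note Y = assms(1) and wp = assms(2)
  have ws: "summable w" using assms(3) by (rule sums_summable)
  have w1: "suminf w = 1" using assms(3) by (simp add: sums_iff)
  define e where "e = 1/(8*Y^2)"
  have e: "e > 0" using Y by (simp add: e_def)
  let ?S = "strat Y w F"
  fix x :: "nat \<Rightarrow> 'x" and y :: "nat \<Rightarrow> real ^ 'm"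
  assume ny: "\<forall>n\<ge>1. norm (y n) \<le> Y"
  define H where "H n = map (\<lambda>k. (x k, y k)) [1..<n]" for n
  define lo where "lo n = (norm (y n - ?S (H n) (x n)))^2" for n
  note wf = wt_facts[OF Y wp ws]
  have OS: "norm (?S (H n) (x n)) \<le> Y \<and>
      (\<Sum>i. wt Y w F (H n) i * exp (-e * (norm (y n - clip Y (F i (x n))))^2))
        \<le> suminf (wt Y w F (H n)) * exp (-e * lo n)" if n: "n \<ge> 1" for n
    using one_step[where v="wt Y w F (H n)" and g="\<lambda>i. clip Y (F i (x n))" and y="y n",
        OF Y less_imp_le[OF wf(1)] wf(3) wf(4) clip_norm[OF less_imp_le[OF Y]]] ny n
    unfolding strat_def lo_def e_def by auto
  show "norm (?S (map (\<lambda>k. (x k, y k)) [1..<n]) (x n)) \<le> Y" if "n \<ge> 1" for n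
    using OS[OF that] unfolding H_def by blast
  have Hs: "H (Suc n) = H n @ [(x n, y n)]" if "n \<ge> 1" for n
    using that by (simp add: H_def)
  have wts: "wt Y w F (H (Suc n)) i = wt Y w F (H n) i * exp (-e * (norm (y n - clip Y (F i (x n))))^2)"
    if "n \<ge> 1" for n i
    using that by (simp add: Hs wt_def lossL_snoc e_def algebra_simps exp_add[symmetric])
  have main: "suminf (wt Y w F (H (Suc N))) \<le> exp (-e * (\<Sum>n=1..N. lo n))" for N
  proof (induction N)
    case 0
    have "wt Y w F (H (Suc 0)) = w" by (simp add: H_def wt_def lossL_def fun_eq_iff)
    thus ?case using w1 by simp
  next
    case (Suc N)
    have "suminf (wt Y w F (H (Suc (Suc N))))
        = (\<Sum>i. wt Y w F (H (Suc N)) i * exp (-e * (norm (y (Suc N) - clip Y (F i (x (Suc N)))))^2))"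
      by (rule suminf_cong) (rule wts, simp)
    also have "\<dots> \<le> suminf (wt Y w F (H (Suc N))) * exp (-e * lo (Suc N))"
      using OS[of "Suc N"] by simp
    also have "\<dots> \<le> exp (-e * (\<Sum>n=1..N. lo n)) * exp (-e * lo (Suc N))"
      using Suc.IH by (intro mult_right_mono) auto
    also have "\<dots> = exp (-e * (\<Sum>n=1..Suc N. lo n))"
      by (simp add: exp_add[symmetric] algebra_simps)
    finally show ?case .
  qed
  fix N i :: nat assume N: "N \<ge> 1"
  have "(\<Sum>j\<in>{i}. wt Y w F (H (Suc N)) j) \<le> suminf (wt Y w F (H (Suc N)))"
    by (rule sum_le_suminf[OF wf(3)]) (auto intro: less_imp_le wf(1))
  hence "wt Y w F (H (Suc N)) i \<le> suminf (wt Y w F (H (Suc N)))" by simp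
  also note main[of N]
  finally have A: "w i * exp (-e * lossL Y (F i) (H (Suc N))) \<le> exp (-e * (\<Sum>n=1..N. lo n))"
    by (simp add: wt_def e_def)
  have "ln (w i * exp (-e * lossL Y (F i) (H (Suc N)))) \<le> ln (exp (-e * (\<Sum>n=1..N. lo n)))"
    using A wp by (subst ln_le_cancel_iff) auto
  hence B: "ln (w i) - e * lossL Y (F i) (H (Suc N)) \<le> - e * (\<Sum>n=1..N. lo n)"
    using wp[rule_format, of i] by (simp add: ln_mult)
  have L: "lossL Y (F i) (H (Suc N)) = (\<Sum>n=1..N. (norm (y n - clip Y (F i (x n))))^2)"
  proof -
    have "lossL Y (F i) (H (Suc N)) = sum_list (map (\<lambda>n. (norm (y n - clip Y (F i (x n))))^2) [1..<Suc N])"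
      by (simp add: lossL_def H_def comp_def)
    also have "\<dots> = sum (\<lambda>n. (norm (y n - clip Y (F i (x n))))^2) (set [1..<Suc N])"
      by (rule sum_set_upt_conv_sum_list_nat[symmetric])
    also have "set [1..<Suc N] = {1..N}" by auto
    finally show ?thesis .
  qed
  have C: "(\<Sum>n=1..N. (norm (y n - clip Y (F i (x n))))^2) \<le> (\<Sum>n=1..N. (norm (y n - F i (x n)))^2)"
  proof (rule sum_mono)
    fix n assume "n \<in> {1..N}"
    hence "norm (y n) \<le> Y" using ny by auto
    thus "(norm (y n - clip Y (F i (x n))))^2 \<le> (norm (y n - F i (x n)))^2"
      using clip_dist[OF Y] by (intro power_mono) auto
  qed
  have D: "(\<Sum>n=1..N. lo n) \<le> lossL Y (F i) (H (Suc N)) + ln (1 / w i) / e"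
    using B e wp[rule_format, of i] by (simp add: ln_div field_simps)
  have "ln (1 / w i) / e = 8 * Y\<^sup>2 * ln (1 / w i)" by (simp add: e_def)
  thus "(\<Sum>n=1..N. (norm (y n - ?S (map (\<lambda>k. (x k, y k)) [1..<n]) (x n)))\<^sup>2)
        \<le> (\<Sum>n=1..N. (norm (y n - F i (x n)))\<^sup>2) + 8 * Y\<^sup>2 * ln (1 / w i)"
    using D L C unfolding lo_def H_def by linarith
qed

end
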